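(* Let $D$ be an integral domain. Then every nonzero prime ideal of $R(D)$ is an intersection of ideals of the form $\mathfrak p_f$ with $f\in D\setminus\{0\}$.
   Context: For an integral domain $D$ with fraction field $F$, the reciprocal complement $R(D)$ is the subring of $F$ generated by all $1/d$, $d\in D\setminus\{0\}$. For nonzero $f\in D$, $\mathfrak p_f$ denotes the unique prime ideal of $R(D)$ maximal with respect to not containing $1/f$. *)

theory Defs
  imports "HOL-Computational_Algebra.Fraction_Field"
begin

text \<open>The integral domain D is the type 'a (class idom); its fraction field is 'a fract,
  with D embedded via d maps to Fract d 1.\<close>

inductive_set recip_compl :: "('a::idom) fract set" where
  recip: "d \<noteq> 0 \<Longrightarrow> 1 / Fract d 1 \<in> recip_compl"
| zero: "0 \<in> recip_compl"
| one: "1 \<in> recip_compl"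
| add: "x \<in> recip_compl \<Longrightarrow> y \<in> recip_compl \<Longrightarrow> x + y \<in> recip_compl"
| neg: "x \<in> recip_compl \<Longrightarrow> - x \<in> recip_compl"
| mult: "x \<in> recip_compl \<Longrightarrow> y \<in> recip_compl \<Longrightarrow> x * y \<in> recip_compl"

definition rc_ideal :: "('a::idom) fract set \<Rightarrow> bool" where
  "rc_ideal I \<longleftrightarrow> I \<subseteq> recip_compl \<and> 0 \<in> I \<and>
     (\<forall>x\<in>I. \<forall>y\<in>I. x + y \<in> I) \<and> (\<forall>x\<in>I. - x \<in> I) \<and>
     (\<forall>r\<in>recip_compl. \<forall>x\<in>I. r * x \<in> I)"

definition rc_prime :: "('a::idom) fract set \<Rightarrow> bool" where
  "rc_prime P \<longleftrightarrow> rc_ideal P \<and> P \<noteq> recip_compl \<and>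
     (\<forall>a\<in>recip_compl. \<forall>b\<in>recip_compl. a * b \<in> P \<longrightarrow> a \<in> P \<or> b \<in> P)"

definition p_f :: "('a::idom) \<Rightarrow> 'a fract set" where
  "p_f f = (THE P. rc_prime P \<and> 1 / Fract f 1 \<notin> P \<and>
     (\<forall>Q. rc_prime Q \<and> 1 / Fract f 1 \<notin> Q \<and> P \<subseteq> Q \<longrightarrow> Q = P))"

end

theory Submission
  imports Defs
begin

lemma uf_eq: "1 / Fract (e::'a::idom) 1 = Fract 1 e"
  by (simp add: One_fract_def)

lemma uf_in: "Fract 1 (e::'a::idom) \<in> recip_compl"
proof (cases "e = 0")
  case True then show ?thesis by (simp add: eq_fract(2) recip_compl.zero flip: Zero_fract_def)
next
  case False then show ?thesis using recip_compl.recip[of e] by (simp add: uf_eq)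
qed

lemma rc_diff: "x \<in> recip_compl \<Longrightarrow> y \<in> recip_compl \<Longrightarrow> x - y \<in> recip_compl"
  using recip_compl.add recip_compl.neg by (metis diff_conv_add_uminus)

lemma rc_sum: "(\<forall>e\<in>set xs. True) \<Longrightarrow> sum_list (map (\<lambda>e. Fract 1 (e::'a::idom)) xs) \<in> recip_compl"
  by (induction xs) (auto intro: recip_compl.intros uf_in)

lemma sum_mult_list:
  fixes xs ys :: "'a::idom list"
  shows "sum_list (map (\<lambda>e. Fract 1 e) xs) * sum_list (map (\<lambda>e. Fract 1 e) ys)
       = sum_list (map (\<lambda>e. Fract 1 e) (concat (map (\<lambda>a. map (\<lambda>b. a*b) ys) xs)))"
proof (induction xs)
  case Nil then show ?case by simp
next
  case (Cons a xs)
  have h: "sum_list (map (\<lambda>e. Fract 1 e) (map ((*) a) ys)) = Fract 1 a * sum_list (map (\<lambda>e. Fract 1 e) ys)"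
    by (induction ys) (auto simp: distrib_left)
  show ?case using Cons h by (simp add: distrib_right)
qed

lemma rc_rep:
  assumes "x \<in> recip_compl"
  shows "\<exists>xs::'a::idom list. (\<forall>e\<in>set xs. e \<noteq> 0) \<and> x = sum_list (map (\<lambda>e. Fract 1 e) xs)"
  using assms
proof (induction rule: recip_compl.induct)
  case (recip d) then show ?case by (intro exI[of _ "[d]"]) (simp add: uf_eq)
next
  case zero then show ?case by (intro exI[of _ "[]"]) simp
next
  case one then show ?case by (intro exI[of _ "[1]"]) (simp add: One_fract_def)
next
  case (add x y)
  then obtain xs ys where "(\<forall>e\<in>set xs. e \<noteq> 0)" "x = sum_list (map (\<lambda>e. Fract 1 e) xs)"
     "(\<forall>e\<in>set ys. e \<noteq> 0)" "y = sum_list (map (\<lambda>e. Fract 1 e) ys)" by blast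
  then show ?case by (intro exI[of _ "xs @ ys"]) auto
next
  case (neg x)
  then obtain xs where "(\<forall>e\<in>set xs. e \<noteq> 0)" "x = sum_list (map (\<lambda>e. Fract 1 e) xs)" by blast
  moreover have "- sum_list (map (\<lambda>e. Fract 1 e) xs) = sum_list (map (\<lambda>e. Fract 1 e) (map uminus xs))"
    by (induction xs) (auto, metis minus_fract_cancel minus_minus)
  ultimately show ?case by (intro exI[of _ "map uminus xs"]) auto
next
  case (mult x y)
  then obtain xs ys where "(\<forall>e\<in>set xs. e \<noteq> 0)" "x = sum_list (map (\<lambda>e. Fract 1 e) xs)"
     "(\<forall>e\<in>set ys. e \<noteq> 0)" "y = sum_list (map (\<lambda>e. Fract 1 e) ys)" by blast
  then show ?case by (intro exI[of _ "concat (map (\<lambda>a. map (\<lambda>b. a*b) ys) xs)"]) (auto simp: sum_mult_list)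
qed

lemma ideal_mult:
  assumes "rc_ideal Q" "r \<in> recip_compl" "x \<in> Q"
  shows "r * x \<in> Q" "x * r \<in> Q"
  using assms unfolding rc_ideal_def by (auto simp: mult.commute)

lemma ideal_add: "rc_ideal Q \<Longrightarrow> x \<in> Q \<Longrightarrow> y \<in> Q \<Longrightarrow> x + y \<in> Q"
  unfolding rc_ideal_def by blast

lemma ideal_neg: "rc_ideal Q \<Longrightarrow> x \<in> Q \<Longrightarrow> - x \<in> Q"
  unfolding rc_ideal_def by blast

lemma ideal_diff: "rc_ideal Q \<Longrightarrow> x \<in> Q \<Longrightarrow> y \<in> Q \<Longrightarrow> x - y \<in> Q"
  by (metis diff_conv_add_uminus ideal_add ideal_neg)

lemma ideal_sub: "rc_ideal Q \<Longrightarrow> x \<in> Q \<Longrightarrow> x \<in> recip_compl"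
  unfolding rc_ideal_def by blast

lemma ideal_zero: "rc_ideal Q \<Longrightarrow> 0 \<in> Q"
  unfolding rc_ideal_def by blast

lemma ideal_sum: "rc_ideal Q \<Longrightarrow> \<forall>e\<in>set xs. Fract 1 e \<in> Q \<Longrightarrow> sum_list (map (Fract 1) xs) \<in> Q"
  by (induction xs) (auto intro: ideal_add ideal_zero)

lemma prime_one: assumes "rc_prime Q" shows "1 \<notin> Q"
proof
  assume "1 \<in> Q"
  then have "\<forall>r\<in>recip_compl. r \<in> Q" using assms ideal_mult(1)[of Q _ 1] unfolding rc_prime_def by auto
  then show False using assms unfolding rc_prime_def rc_ideal_def by blast
qed

lemma prime_mult: "rc_prime Q \<Longrightarrow> a \<in> recip_compl \<Longrightarrow> b \<in> recip_compl \<Longrightarrow> a \<notin> Q \<Longrightarrow> b \<notin> Q \<Longrightarrow> a * b \<notin> Q"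
  unfolding rc_prime_def by blast

definition DQ :: "'a::idom fract set \<Rightarrow> 'a \<Rightarrow> bool" where
  "DQ Q e \<longleftrightarrow> e = 0 \<or> Fract 1 e \<notin> Q"

lemma DQ_mult: assumes "rc_prime Q" "DQ Q a" "DQ Q b" shows "DQ Q (a*b)"
proof (cases "a = 0 \<or> b = 0")
  case True then show ?thesis by (auto simp: DQ_def)
next
  case False
  then have "Fract 1 a \<notin> Q" "Fract 1 b \<notin> Q" using assms by (auto simp: DQ_def)
  then have "Fract 1 a * Fract 1 b \<notin> Q" using prime_mult[OF assms(1) uf_in uf_in] by blast
  then show ?thesis by (simp add: DQ_def)
qed

lemma DQ_neg: assumes "rc_prime Q" "DQ Q a" shows "DQ Q (-a)"
proof -
  have "Fract 1 (-a) = - Fract 1 a" by (metis minus_fract minus_fract_cancel minus_minus)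
  then show ?thesis using assms ideal_neg[of Q "Fract 1 (-a)"] unfolding DQ_def rc_prime_def by force
qed

lemma DQ_add: assumes "rc_prime Q" "DQ Q a" "DQ Q b" shows "DQ Q (a+b)"
proof (cases "a = 0 \<or> b = 0 \<or> a + b = 0")
  case True then show ?thesis using assms by (auto simp: DQ_def)
next
  case False
  then have na: "Fract 1 a \<notin> Q" "Fract 1 b \<notin> Q" using assms by (auto simp: DQ_def)
  then have nab: "Fract 1 (a*b) \<notin> Q" using prime_mult[OF assms(1) uf_in uf_in] by simp
  have eq: "Fract 1 (a*b) = (Fract 1 a + Fract 1 b) * Fract 1 (a+b)"
  proof -
    have "(Fract 1 a + Fract 1 b) * Fract 1 (a+b) = Fract ((a+b)*1) ((a+b)*(a*b))"
      using False by (simp add: algebra_simps)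
    also have "\<dots> = Fract 1 (a*b)" using mult_fract_cancel[of "a+b" 1 "a*b"] False by simp
    finally show ?thesis by simp
  qed
  show ?thesis
  proof (rule ccontr)
    assume "\<not> DQ Q (a+b)"
    then have "Fract 1 (a+b) \<in> Q" by (simp add: DQ_def)
    then have "(Fract 1 a + Fract 1 b) * Fract 1 (a+b) \<in> Q"
      using assms(1) ideal_mult(1) recip_compl.add uf_in unfolding rc_prime_def by blast
    then show False using nab eq by simp
  qed
qed

lemma DQ_one: "rc_prime Q \<Longrightarrow> DQ Q 1"
  using prime_one by (auto simp: DQ_def One_fract_def)

lemma DQ_pow: "rc_prime Q \<Longrightarrow> DQ Q a \<Longrightarrow> DQ Q (a ^ k)"
  by (induction k) (auto intro: DQ_one DQ_mult)

lemma DQ_diff: "rc_prime Q \<Longrightarrow> DQ Q a \<Longrightarrow> DQ Q b \<Longrightarrow> DQ Q (a - b)"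
  by (metis DQ_add DQ_neg diff_conv_add_uminus)

lemma frac_form:
  assumes "rc_prime Q" "\<forall>e\<in>set xs. e \<noteq> 0 \<and> Fract 1 e \<notin> Q"
  shows "\<exists>a b. b \<noteq> 0 \<and> Fract 1 b \<notin> Q \<and> DQ Q a \<and> sum_list (map (Fract 1) xs) = Fract a b"
  using assms(2)
proof (induction xs)
  case Nil then show ?case using DQ_one[OF assms(1)] by (intro exI[of _ 0] exI[of _ 1]) (auto simp: DQ_def Zero_fract_def)
next
  case (Cons e xs)
  then obtain a b where ab: "b \<noteq> 0" "Fract 1 b \<notin> Q" "DQ Q a" "sum_list (map (Fract 1) xs) = Fract a b" by auto
  have e: "e \<noteq> 0" "Fract 1 e \<notin> Q" using Cons by auto
  have De: "DQ Q e" using e by (simp add: DQ_def)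
  have Db: "DQ Q b" using ab by (simp add: DQ_def)
  have "DQ Q (b + a * e)" by (rule DQ_add[OF assms(1) Db DQ_mult[OF assms(1) ab(3) De]])
  moreover have "DQ Q (e*b)" by (rule DQ_mult[OF assms(1) De Db])
  ultimately show ?case using ab e by (intro exI[of _ "b + a*e"] exI[of _ "e*b"]) (auto simp: DQ_def)
qed

lemma frac_zero:
  assumes "rc_prime Q" "DQ Q a" "b \<noteq> 0" "Fract 1 b \<notin> Q" "Fract a b \<in> Q"
  shows "a = 0"
proof (rule ccontr)
  assume a: "a \<noteq> 0"
  have "Fract 1 a * Fract a b \<in> Q" using assms(1,5) ideal_mult(1) uf_in unfolding rc_prime_def by blast
  moreover have "Fract 1 a * Fract a b = Fract 1 b" using a mult_fract_cancel[of a 1 b] by simp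
  ultimately show False using assms(4) by simp
qed

lemma sum_filter_split:
  fixes f :: "'x \<Rightarrow> 'y::comm_monoid_add"
  shows "sum_list (map f xs) = sum_list (map f (filter P xs)) + sum_list (map f (filter (\<lambda>e. \<not> P e) xs))"
  by (induction xs) (auto simp: add_ac)

lemma split_rc:
  assumes "rc_prime Q" "r \<in> recip_compl"
  shows "\<exists>a b n. b \<noteq> 0 \<and> Fract 1 b \<notin> Q \<and> DQ Q a \<and> n \<in> Q \<and> r = Fract a b + n"
proof -
  obtain xs where xs: "\<forall>e\<in>set xs. e \<noteq> 0" "r = sum_list (map (Fract 1) xs)"
    using rc_rep[OF assms(2)] by auto
  have I: "rc_ideal Q" using assms(1) by (simp add: rc_prime_def)
  have n: "sum_list (map (Fract 1) (filter (\<lambda>e. Fract 1 e \<in> Q) xs)) \<in> Q"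
    by (rule ideal_sum[OF I]) auto
  obtain a b where ab: "b \<noteq> 0" "Fract 1 b \<notin> Q" "DQ Q a"
     "sum_list (map (Fract 1) (filter (\<lambda>e. \<not> Fract 1 e \<in> Q) xs)) = Fract a b"
    using frac_form[OF assms(1), of "filter (\<lambda>e. \<not> Fract 1 e \<in> Q) xs"] xs(1) by auto
  have "r = Fract a b + sum_list (map (Fract 1) (filter (\<lambda>e. Fract 1 e \<in> Q) xs))"
    using xs(2) sum_filter_split[of "Fract 1" xs "\<lambda>e. Fract 1 e \<in> Q"] ab(4) by (simp add: add.commute)
  then show ?thesis using ab n by blast
qed

lemma fract_pow: "Fract 1 (f::'a::idom) ^ k = Fract 1 (f ^ k)"
  by (induction k) (auto simp: One_fract_def)

definition avoid :: "'a::idom \<Rightarrow> 'a fract set \<Rightarrow> bool" where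
  "avoid f J \<longleftrightarrow> (\<forall>k. Fract 1 f ^ k \<notin> J)"

definition maxav :: "'a::idom \<Rightarrow> 'a fract set \<Rightarrow> bool" where
  "maxav f Q \<longleftrightarrow> rc_ideal Q \<and> avoid f Q \<and> (\<forall>Q'. rc_ideal Q' \<and> Q \<subseteq> Q' \<and> avoid f Q' \<longrightarrow> Q' = Q)"

lemma zorn_av:
  assumes "rc_ideal J" "avoid f J"
  shows "\<exists>Q. maxav f Q \<and> J \<subseteq> Q"
proof -
  let ?A = "{Q. rc_ideal Q \<and> J \<subseteq> Q \<and> avoid f Q}"
  have "\<exists>M\<in>?A. \<forall>X\<in>?A. M \<subseteq> X \<longrightarrow> X = M"
  proof (rule subset_Zorn_nonempty)
    show "?A \<noteq> {}" using assms by blast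
  next
    fix C assume C: "C \<noteq> {}" "subset.chain ?A C"
    then have CA: "C \<subseteq> ?A" and ch: "\<forall>X\<in>C. \<forall>Y\<in>C. X \<subseteq> Y \<or> Y \<subseteq> X"
      by (auto simp: subset_chain_def)
    have "rc_ideal (\<Union>C)"
      unfolding rc_ideal_def
    proof (intro conjI ballI)
      show "\<Union>C \<subseteq> recip_compl" using CA by (auto simp: rc_ideal_def)
      show "0 \<in> \<Union>C" using C(1) CA by (auto simp: rc_ideal_def)
    next
      fix x y assume "x \<in> \<Union>C" "y \<in> \<Union>C"
      then obtain X Y where XY: "X \<in> C" "Y \<in> C" "x \<in> X" "y \<in> Y" by blast
      show "x + y \<in> \<Union>C"
      proof (cases "X \<subseteq> Y")
        case True then show ?thesis using XY CA ideal_add[of Y x y] by blast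
      next
        case False then have "Y \<subseteq> X" using ch XY by blast
        then show ?thesis using XY CA ideal_add[of X x y] by blast
      qed
    next
      fix x assume "x \<in> \<Union>C"
      then show "- x \<in> \<Union>C" using CA ideal_neg by blast
    next
      fix r x :: "'a fract" assume "r \<in> recip_compl" "x \<in> \<Union>C"
      then show "r * x \<in> \<Union>C" using CA ideal_mult(1) by blast
    qed
    moreover have "J \<subseteq> \<Union>C" using C(1) CA by blast
    moreover have "avoid f (\<Union>C)" using CA by (auto simp: avoid_def)
    ultimately show "\<Union>C \<in> ?A" by blast
  qed
  then obtain M where "M \<in> ?A" "\<forall>X\<in>?A. M \<subseteq> X \<longrightarrow> X = M" by blast
  then have "maxav f M \<and> J \<subseteq> M" unfolding maxav_def by blast
  then show ?thesis by blast
qed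

lemma maxav_gen:
  assumes "maxav f Q" "x \<in> recip_compl" "x \<notin> Q"
  shows "\<exists>q\<in>Q. \<exists>r\<in>recip_compl. \<exists>k. q + x * r = Fract 1 f ^ k"
proof (rule ccontr)
  assume na: "\<not> ?thesis"
  have I: "rc_ideal Q" using assms(1) by (simp add: maxav_def)
  let ?Q = "{q + x * r | q r. q \<in> Q \<and> r \<in> recip_compl}"
  have "rc_ideal ?Q"
    unfolding rc_ideal_def
  proof (intro conjI ballI)
    show "?Q \<subseteq> recip_compl" using I assms(2) ideal_sub[OF I] by (auto intro: recip_compl.intros)
    show "0 \<in> ?Q" using ideal_zero[OF I] recip_compl.zero by force
  next
    fix a b assume "a \<in> ?Q" "b \<in> ?Q"
    then obtain q1 r1 q2 r2 where "q1 \<in> Q" "r1 \<in> recip_compl" "q2 \<in> Q" "r2 \<in> recip_compl"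
      "a = q1 + x * r1" "b = q2 + x * r2" by blast
    then show "a + b \<in> ?Q"
      by (intro CollectI exI[of _ "q1+q2"] exI[of _ "r1+r2"]) (auto simp: algebra_simps intro: ideal_add[OF I] recip_compl.add)
  next
    fix a assume "a \<in> ?Q"
    then obtain q1 r1 where "q1 \<in> Q" "r1 \<in> recip_compl" "a = q1 + x * r1" by blast
    then show "- a \<in> ?Q"
      by (intro CollectI exI[of _ "-q1"] exI[of _ "-r1"]) (auto intro: ideal_neg[OF I] recip_compl.neg)
  next
    fix s a :: "'a fract" assume "s \<in> recip_compl" "a \<in> ?Q"
    then obtain q1 r1 where "q1 \<in> Q" "r1 \<in> recip_compl" "a = q1 + x * r1" by blast
    then show "s * a \<in> ?Q" using \<open>s \<in> recip_compl\<close>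
      by (intro CollectI exI[of _ "s*q1"] exI[of _ "s*r1"]) (auto simp: algebra_simps intro: ideal_mult[OF I] recip_compl.mult)
  qed
  moreover have "Q \<subseteq> ?Q" using recip_compl.zero by force
  moreover have "avoid f ?Q" unfolding avoid_def
  proof (intro allI notI)
    fix k assume "Fract 1 f ^ k \<in> ?Q"
    then obtain q r where "q \<in> Q" "r \<in> recip_compl" "Fract 1 f ^ k = q + x * r" by blast
    then show False using na by metis
  qed
  ultimately have "?Q = Q" using assms(1) unfolding maxav_def by blast
  moreover have "x \<in> ?Q" using ideal_zero[OF I] recip_compl.one by force
  ultimately show False using assms(3) by simp
qed

lemma maxav_prime:
  assumes "maxav f Q" shows "rc_prime Q"
proof -
  have I: "rc_ideal Q" and av: "avoid f Q" using assms by (auto simp: maxav_def)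
  have "1 \<notin> Q" using av unfolding avoid_def by (metis power_0)
  then have ne: "Q \<noteq> recip_compl" using recip_compl.one by blast
  have "a \<in> Q \<or> b \<in> Q" if ab: "a \<in> recip_compl" "b \<in> recip_compl" "a * b \<in> Q" for a b
  proof (rule ccontr)
    assume nn: "\<not> (a \<in> Q \<or> b \<in> Q)"
    obtain q1 r1 j q2 r2 k where g: "q1 \<in> Q" "r1 \<in> recip_compl" "q1 + a * r1 = Fract 1 f ^ j"
      "q2 \<in> Q" "r2 \<in> recip_compl" "q2 + b * r2 = Fract 1 f ^ k"
      using maxav_gen[OF assms ab(1)] maxav_gen[OF assms ab(2)] nn by metis
    have "(q1 + a * r1) * (q2 + b * r2) = q1 * (q2 + b * r2) + (a * r1) * q2 + (a * b) * (r1 * r2)"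
      by (simp add: algebra_simps)
    moreover have "q2 + b * r2 \<in> recip_compl" using g ab ideal_sub[OF I] by (intro recip_compl.add recip_compl.mult) auto
    then have "q1 * (q2 + b * r2) \<in> Q" using g by (intro ideal_mult(2)[OF I])
    moreover have "(a * r1) * q2 \<in> Q" using g ab by (intro ideal_mult(1)[OF I]) (auto intro: recip_compl.intros)
    moreover have "(a * b) * (r1 * r2) \<in> Q" using g by (intro ideal_mult(2)[OF I _ ab(3)] recip_compl.mult)
    ultimately have "Fract 1 f ^ (j + k) \<in> Q" using g by (simp add: power_add ideal_add[OF I])
    then show False using av by (simp add: avoid_def)
  qed
  then show ?thesis using I ne by (simp add: rc_prime_def)
qed

lemma Fract_one_zero: "Fract 1 (0::'a::idom) = 0"
  by (simp add: eq_fract(2) Zero_fract_def)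

lemma Fract_zero: "Fract 0 (b::'a::idom) = 0"
  by (metis Zero_fract_def eq_fract(3))

lemma maxav_f_nz: "maxav f Q \<Longrightarrow> f \<noteq> 0"
  using ideal_zero[of Q] unfolding maxav_def avoid_def
  by (metis Fract_one_zero power_one_right)

lemma maxav_char:
  assumes "maxav f Q" "d \<noteq> 0"
  shows "Fract 1 d \<notin> Q \<longleftrightarrow> (\<exists>s\<in>recip_compl. \<exists>k. Fract 1 d * s = Fract 1 f ^ k)"
proof
  have I: "rc_ideal Q" and av: "avoid f Q" using assms by (auto simp: maxav_def)
  have P: "rc_prime Q" using maxav_prime[OF assms(1)] .
  have fnz: "f \<noteq> 0" using maxav_f_nz[OF assms(1)] .
  assume nd: "Fract 1 d \<notin> Q"
  obtain q r k where g: "q \<in> Q" "r \<in> recip_compl" "q + Fract 1 d * r = Fract 1 f ^ k"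
    using maxav_gen[OF assms(1) uf_in nd] by blast
  obtain a b n where s: "b \<noteq> 0" "Fract 1 b \<notin> Q" "DQ Q a" "n \<in> Q" "r = Fract a b + n"
    using split_rc[OF P g(2)] by blast
  have Df: "DQ Q f" using av unfolding avoid_def DQ_def by (metis power_one_right)
  have Dd: "DQ Q d" using nd by (simp add: DQ_def)
  have Db: "DQ Q b" using s by (simp add: DQ_def)
  let ?c = "a * f ^ k - 1 * (d * b)"
  let ?B = "d * b * f ^ k"
  have Dc: "DQ Q ?c" using DQ_diff[OF P DQ_mult[OF P s(3) DQ_pow[OF P Df]] DQ_mult[OF P DQ_one[OF P] DQ_mult[OF P Dd Db]]] .
  have Bnz: "?B \<noteq> 0" using fnz assms(2) s(1) by simp
  have DB: "DQ Q ?B" using DQ_mult[OF P DQ_mult[OF P Dd Db] DQ_pow[OF P Df]] .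
  then have nB: "Fract 1 ?B \<notin> Q" using Bnz unfolding DQ_def by blast
  have eq1: "Fract 1 d * Fract a b - Fract 1 f ^ k = Fract ?c ?B"
    using assms(2) s(1) fnz by (simp add: fract_pow)
  have "Fract 1 d * Fract a b - Fract 1 f ^ k = - (q + Fract 1 d * n)"
    using g(3) s(5) by (simp add: algebra_simps)
  moreover have "- (q + Fract 1 d * n) \<in> Q"
    using g(1) s(4) by (intro ideal_neg[OF I] ideal_add[OF I] ideal_mult(1)[OF I uf_in])
  ultimately have "Fract ?c ?B \<in> Q" using eq1 by simp
  then have "?c = 0" using frac_zero[OF P Dc Bnz nB] by simp
  then have "Fract 1 d * Fract a b - Fract 1 f ^ k = 0" using eq1 by (simp only: Fract_zero)
  then have "Fract 1 d * Fract a b = Fract 1 f ^ k" by simp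
  moreover have "Fract a b \<in> recip_compl"
    using rc_diff[OF g(2) ideal_sub[OF I s(4)]] s(5) by simp
  ultimately show "\<exists>s\<in>recip_compl. \<exists>k. Fract 1 d * s = Fract 1 f ^ k" by blast
next
  have I: "rc_ideal Q" and av: "avoid f Q" using assms by (auto simp: maxav_def)
  assume "\<exists>s\<in>recip_compl. \<exists>k. Fract 1 d * s = Fract 1 f ^ k"
  then obtain s k where "s \<in> recip_compl" "Fract 1 d * s = Fract 1 f ^ k" by blast
  then show "Fract 1 d \<notin> Q" using av ideal_mult(2)[OF I] unfolding avoid_def by metis
qed

lemma maxav_sub:
  assumes "maxav f Q1" "maxav f Q2"
  shows "Q1 \<subseteq> Q2"
proof
  fix x assume x: "x \<in> Q1"
  have I1: "rc_ideal Q1" and I2: "rc_ideal Q2" using assms by (auto simp: maxav_def)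
  have P1: "rc_prime Q1" using maxav_prime[OF assms(1)] .
  obtain xs where xs: "\<forall>e\<in>set xs. e \<noteq> 0" "x = sum_list (map (Fract 1) xs)"
    using rc_rep[OF ideal_sub[OF I1 x]] by auto
  let ?n = "sum_list (map (Fract 1) (filter (\<lambda>e. Fract 1 e \<in> Q1) xs))"
  let ?u = "sum_list (map (Fract 1) (filter (\<lambda>e. \<not> Fract 1 e \<in> Q1) xs))"
  have n1: "?n \<in> Q1" by (rule ideal_sum[OF I1]) auto
  have n2: "?n \<in> Q2"
  proof (rule ideal_sum[OF I2], intro ballI)
    fix e assume "e \<in> set (filter (\<lambda>e. Fract 1 e \<in> Q1) xs)"
    then have "e \<noteq> 0" "Fract 1 e \<in> Q1" using xs by auto
    then show "Fract 1 e \<in> Q2" using maxav_char[OF assms(1)] maxav_char[OF assms(2)] by blast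
  qed
  have xu: "x = ?u + ?n"
    using xs(2) sum_filter_split[of "Fract 1" xs "\<lambda>e. Fract 1 e \<in> Q1"] by (simp add: add.commute)
  obtain a b where ab: "b \<noteq> 0" "Fract 1 b \<notin> Q1" "DQ Q1 a" "?u = Fract a b"
    using frac_form[OF P1, of "filter (\<lambda>e. \<not> Fract 1 e \<in> Q1) xs"] xs(1) by auto
  have "?u \<in> Q1" using ideal_diff[OF I1 x n1] xu by simp
  then have "a = 0" using frac_zero[OF P1 ab(3) ab(1) ab(2)] ab(4) by simp
  then have "?u = 0" using ab(4) Fract_zero by simp
  then show "x \<in> Q2" using xu n2 by simp
qed

definition Pf :: "'a::idom \<Rightarrow> 'a fract set" where
  "Pf f = {x \<in> recip_compl. \<not> (\<exists>s\<in>recip_compl. \<exists>k. x * s = Fract 1 f ^ k)}"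

lemma pow_notin: "rc_prime Q \<Longrightarrow> Fract 1 f \<notin> Q \<Longrightarrow> Fract 1 f ^ k \<notin> Q"
proof (induction k)
  case 0 then show ?case using prime_one by simp
next
  case (Suc k)
  have "Fract 1 f ^ k \<in> recip_compl" by (induction k) (auto intro: recip_compl.intros uf_in)
  then show ?case using Suc prime_mult[OF Suc(2) uf_in] by simp
qed

lemma Fract_one_nz: "e \<noteq> 0 \<Longrightarrow> Fract 1 (e::'a::idom) \<noteq> 0"
  by (simp add: Zero_fract_def eq_fract(1))

lemma Pf_props:
  assumes "(f::'a::idom) \<noteq> 0"
  shows "rc_prime (Pf f) \<and> Fract 1 f \<notin> Pf f \<and> (\<forall>Q. rc_prime Q \<and> Fract 1 f \<notin> Q \<longrightarrow> Q \<subseteq> Pf f)"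
proof -
  have sub: "Q \<subseteq> Pf f" if "rc_prime Q" "Fract 1 f \<notin> Q" for Q
  proof
    fix x assume x: "x \<in> Q"
    have I: "rc_ideal Q" using that by (simp add: rc_prime_def)
    have "\<not> (\<exists>s\<in>recip_compl. \<exists>k. x * s = Fract 1 f ^ k)"
    proof
      assume "\<exists>s\<in>recip_compl. \<exists>k. x * s = Fract 1 f ^ k"
      then obtain s k where "s \<in> recip_compl" "x * s = Fract 1 f ^ k" by blast
      then have "Fract 1 f ^ k \<in> Q" using ideal_mult(2)[OF I _ x] by metis
      then show False using pow_notin[OF that] by blast
    qed
    then show "x \<in> Pf f" unfolding Pf_def using ideal_sub[OF I x] by blast
  qed
  have I0: "rc_ideal ({0} :: 'a fract set)" by (auto simp: rc_ideal_def intro: recip_compl.zero)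
  have "avoid f {0}" unfolding avoid_def
  proof
    fix k show "Fract 1 f ^ k \<notin> {0}" using assms Fract_one_nz[of "f ^ k"] by (simp add: fract_pow)
  qed
  then obtain Q0 where Q0: "maxav f Q0" using zorn_av[OF I0] by blast
  have I: "rc_ideal Q0" and av: "avoid f Q0" using Q0 by (auto simp: maxav_def)
  have "Pf f = Q0"
  proof
    show "Q0 \<subseteq> Pf f"
    proof
      fix x assume x: "x \<in> Q0"
      have "\<not> (\<exists>s\<in>recip_compl. \<exists>k. x * s = Fract 1 f ^ k)"
      proof
        assume "\<exists>s\<in>recip_compl. \<exists>k. x * s = Fract 1 f ^ k"
        then obtain s k where "s \<in> recip_compl" "x * s = Fract 1 f ^ k" by blast
        then have "Fract 1 f ^ k \<in> Q0" using ideal_mult(2)[OF I _ x] by metis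
        then show False using av unfolding avoid_def by blast
      qed
      then show "x \<in> Pf f" unfolding Pf_def using ideal_sub[OF I x] by blast
    qed
  next
    show "Pf f \<subseteq> Q0"
    proof
      fix x assume x: "x \<in> Pf f"
      then have xR: "x \<in> recip_compl" by (simp add: Pf_def)
      let ?J = "{x * r | r. r \<in> recip_compl}"
      have IJ: "rc_ideal ?J" unfolding rc_ideal_def
      proof (intro conjI ballI)
        show "?J \<subseteq> recip_compl" using xR by (auto intro: recip_compl.mult)
        show "0 \<in> ?J" using recip_compl.zero by force
      next
        fix a b assume "a \<in> ?J" "b \<in> ?J"
        then obtain r1 r2 where "r1 \<in> recip_compl" "r2 \<in> recip_compl" "a = x * r1" "b = x * r2" by blast
        then show "a + b \<in> ?J" by (intro CollectI exI[of _ "r1 + r2"]) (auto simp: algebra_simps intro: recip_compl.add)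
      next
        fix a assume "a \<in> ?J"
        then obtain r1 where "r1 \<in> recip_compl" "a = x * r1" by blast
        then show "- a \<in> ?J" by (intro CollectI exI[of _ "- r1"]) (auto intro: recip_compl.neg)
      next
        fix s a :: "'a fract" assume "s \<in> recip_compl" "a \<in> ?J"
        then obtain r1 where "r1 \<in> recip_compl" "a = x * r1" by blast
        then show "s * a \<in> ?J" using \<open>s \<in> recip_compl\<close>
          by (intro CollectI exI[of _ "s * r1"]) (auto simp: algebra_simps intro: recip_compl.mult)
      qed
      have "avoid f ?J" unfolding avoid_def
      proof (intro allI notI)
        fix k assume "Fract 1 f ^ k \<in> ?J"
        then obtain r where "r \<in> recip_compl" "Fract 1 f ^ k = x * r" by blast
        then show False using x unfolding Pf_def by (metis (mono_tags, lifting) mem_Collect_eq)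
      qed
      then obtain Q where Q: "maxav f Q" "?J \<subseteq> Q" using zorn_av[OF IJ] by blast
      have "x \<in> ?J" using recip_compl.one by force
      then show "x \<in> Q0" using Q maxav_sub[OF Q(1) Q0] by blast
    qed
  qed
  moreover have "Fract 1 f \<notin> Pf f"
  proof -
    have "Fract 1 f * 1 = Fract 1 f ^ 1" by simp
    then show ?thesis unfolding Pf_def using recip_compl.one by blast
  qed
  ultimately show ?thesis using maxav_prime[OF Q0] sub by blast
qed

lemma p_f_eq:
  assumes "(f::'a::idom) \<noteq> 0"
  shows "p_f f = Pf f"
  unfolding p_f_def uf_eq
proof (rule the_equality)
  show "rc_prime (Pf f) \<and> Fract 1 f \<notin> Pf f \<and>
     (\<forall>Q. rc_prime Q \<and> Fract 1 f \<notin> Q \<and> Pf f \<subseteq> Q \<longrightarrow> Q = Pf f)"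
    using Pf_props[OF assms] by blast
next
  fix P assume H: "rc_prime P \<and> Fract 1 f \<notin> P \<and> (\<forall>Q. rc_prime Q \<and> Fract 1 f \<notin> Q \<and> P \<subseteq> Q \<longrightarrow> Q = P)"
  have A: "rc_prime (Pf f)" "Fract 1 f \<notin> Pf f" "P \<subseteq> Pf f" using Pf_props[OF assms] H by auto
  show "P = Pf f" using H A by (elim conjE allE[of _ "Pf f"]) auto
qed

theorem mainTheorem17:
  fixes P :: "('a::idom) fract set"
  assumes "rc_prime P" and "P \<noteq> {0}"
  shows "\<exists>S. S \<subseteq> {f::'a. f \<noteq> 0} \<and> P = (\<Inter>f\<in>S. p_f f)"
proof (intro exI conjI)
  let ?S = "{f::'a. f \<noteq> 0 \<and> Fract 1 f \<notin> P}"
  show "?S \<subseteq> {f. f \<noteq> 0}" by blast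
  have I: "rc_ideal P" using assms(1) by (simp add: rc_prime_def)
  have eq: "(\<Inter>f\<in>?S. p_f f) = (\<Inter>f\<in>?S. Pf f)" using p_f_eq by auto
  show "P = (\<Inter>f\<in>?S. p_f f)"
    unfolding eq
  proof
    show "P \<subseteq> (\<Inter>f\<in>?S. Pf f)"
    proof (rule INT_greatest)
      fix f assume "f \<in> ?S"
      then have "f \<noteq> 0" "Fract 1 f \<notin> P" by auto
      then show "P \<subseteq> Pf f" using Pf_props[of f] assms(1) by auto
    qed
  next
    show "(\<Inter>f\<in>?S. Pf f) \<subseteq> P"
    proof
      fix x assume x: "x \<in> (\<Inter>f\<in>?S. Pf f)"
      have "1 \<in> ?S" using prime_one[OF assms(1)] by (simp add: One_fract_def)
      then have "x \<in> Pf 1" using x by blast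
      then have xR: "x \<in> recip_compl" by (simp add: Pf_def)
      show "x \<in> P"
      proof (rule ccontr)
        assume nx: "x \<notin> P"
        obtain a b n where s: "b \<noteq> 0" "Fract 1 b \<notin> P" "DQ P a" "n \<in> P" "x = Fract a b + n"
          using split_rc[OF assms(1) xR] by blast
        have "a \<noteq> 0"
        proof
          assume "a = 0"
          then have "x = n" using s(5) by (simp add: Fract_zero)
          then show False using nx s(4) by simp
        qed
        then have na: "Fract 1 a \<notin> P" using s(3) by (simp add: DQ_def)
        have bS: "b \<in> ?S" using s by simp
        have PP: "rc_prime (Pf b)" "P \<subseteq> Pf b" using Pf_props[OF s(1)] assms(1) s(2) by auto
        have IP: "rc_ideal (Pf b)" using PP by (simp add: rc_prime_def)
        have "x \<in> Pf b" using x bS by blast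
        moreover have "n \<in> Pf b" using PP s(4) by blast
        ultimately have "x - n \<in> Pf b" by (rule ideal_diff[OF IP])
        then have "Fract a b \<in> Pf b" using s(5) by simp
        moreover have "Fract a b * Fract 1 a = Fract 1 b ^ 1"
          using \<open>a \<noteq> 0\<close> mult_fract_cancel[of a 1 b] by (simp add: mult.commute)
        ultimately show False using uf_in[of a] unfolding Pf_def by blast
      qed
    qed
  qed
qed

end
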